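(* Let $A$ be a finite nonempty set of actions and $\boldsymbol{v}^0,\boldsymbol{v}^1,\dots\in\mathbb{R}^{|A|}$ an arbitrary sequence of value vectors. Let $\boldsymbol{s}^t$ denote either the regret-matching stored values $\boldsymbol{r}^t$ or the regret-matching$^+$ stored values $\boldsymbol{q}^t$, and $\boldsymbol{\sigma}^t$ the associated policy. Then for every $t$ such that $s^t_a>0$ for some $a\in A$, there exists $b\in A$ with $s^{t+1}_b>0$.
   Context: For $x\in\mathbb{R}$, $x^+:=\max(x,0)$, applied componentwise to vectors. Define $\boldsymbol{\sigma}_{\mathrm{rm}}(\boldsymbol{x}):=\boldsymbol{x}^+/(\boldsymbol{1}\cdot\boldsymbol{x}^+)$ if some $x_a>0$, and $\boldsymbol{1}/|A|$ otherwise. Regret-matching: $\boldsymbol{r}^0=\boldsymbol{0}$, $\boldsymbol{\sigma}^t=\boldsymbol{\sigma}_{\mathrm{rm}}(\boldsymbol{r}^t)$, $\boldsymbol{r}^{t+1}=\boldsymbol{r}^t+\boldsymbol{v}^t-(\boldsymbol{\sigma}^t\cdot\boldsymbol{v}^t)\boldsymbol{1}$. Regret-matching$^+$: $\boldsymbol{q}^0=\boldsymbol{0}$, $\boldsymbol{\sigma}^t=\boldsymbol{\sigma}_{\mathrm{rm}}(\boldsymbol{q}^t)$, $\boldsymbol{q}^{t+1}=\bigl(\boldsymbol{q}^t+\boldsymbol{v}^t-(\boldsymbol{\sigma}^t\cdot\boldsymbol{v}^t)\boldsymbol{1}\bigr)^+$. *)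

theory Defs
  imports Main "HOL.Real"
begin

text \<open>Actions: the elements of a finite (nonempty) type 'a.  Vectors in R^|A| are
functions 'a \<Rightarrow> real.  x^+ is componentwise max(x,0).\<close>

definition pos_part :: "('a \<Rightarrow> real) \<Rightarrow> 'a \<Rightarrow> real" where
  "pos_part x = (\<lambda>a. max (x a) 0)"

definition sigma_rm :: "('a::finite \<Rightarrow> real) \<Rightarrow> 'a \<Rightarrow> real" where
  "sigma_rm x = (if \<exists>a. x a > 0
      then (\<lambda>a. pos_part x a / (\<Sum>b\<in>UNIV. pos_part x b))
      else (\<lambda>a. 1 / real (card (UNIV :: 'a set))))"

definition inst_regret :: "('a::finite \<Rightarrow> real) \<Rightarrow> ('a \<Rightarrow> real) \<Rightarrow> 'a \<Rightarrow> real" where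
  "inst_regret s v = (\<lambda>a. v a - (\<Sum>b\<in>UNIV. sigma_rm s b * v b))"

primrec rm_r :: "(nat \<Rightarrow> 'a::finite \<Rightarrow> real) \<Rightarrow> nat \<Rightarrow> 'a \<Rightarrow> real" where
  "rm_r v 0 = (\<lambda>a. 0)"
| "rm_r v (Suc t) = (\<lambda>a. rm_r v t a + inst_regret (rm_r v t) (v t) a)"

primrec rmp_q :: "(nat \<Rightarrow> 'a::finite \<Rightarrow> real) \<Rightarrow> nat \<Rightarrow> 'a \<Rightarrow> real" where
  "rmp_q v 0 = (\<lambda>a. 0)"
| "rmp_q v (Suc t) = pos_part (\<lambda>a. rmp_q v t a + inst_regret (rmp_q v t) (v t) a)"

end

theory Submission
  imports Defs
begin

lemma key:
  fixes s w :: "'a::finite \<Rightarrow> real"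
  assumes a: "s a > 0"
  shows "\<exists>b. s b + inst_regret s w b > 0"
proof (rule ccontr)
  assume H: "\<not> (\<exists>b. s b + inst_regret s w b > 0)"
  define P where "P = pos_part s"
  define S where "S = (\<Sum>b\<in>UNIV. P b)"
  have P0: "\<And>b. P b \<ge> 0" by (simp add: P_def pos_part_def)
  have Pa: "P a > 0" using a by (simp add: P_def pos_part_def)
  have Spos: "S > 0" unfolding S_def
    by (rule sum_pos2[where i=a]) (use P0 Pa in auto)
  have sig: "sigma_rm s = (\<lambda>b. P b / S)" using a
    unfolding sigma_rm_def P_def S_def by auto
  define c where "c = (\<Sum>b\<in>UNIV. P b / S * w b)"
  have ir: "\<And>b. inst_regret s w b = w b - c"
    by (simp add: inst_regret_def sig c_def)
  have le: "\<And>b. P b * (s b + w b - c) \<le> 0"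
    using H P0 ir by (metis add_diff_eq mult_nonneg_nonpos not_less)
  have "(\<Sum>b\<in>UNIV. P b * (s b + w b - c)) \<le> 0"
    by (rule sum_nonpos) (use le in auto)
  moreover have "(\<Sum>b\<in>UNIV. P b * (s b + w b - c))
      = (\<Sum>b\<in>UNIV. P b * s b) + ((\<Sum>b\<in>UNIV. P b * w b) - c * S)"
    by (simp add: algebra_simps sum.distrib sum_subtractf S_def sum_distrib_left)
  moreover have "(\<Sum>b\<in>UNIV. P b * w b) = c * S"
    using Spos by (simp add: c_def sum_distrib_right)
  moreover have "(\<Sum>b\<in>UNIV. P b * s b) > 0"
  proof (rule sum_pos2[where i=a])
    show "P a * s a > 0" using Pa a by simp
    show "\<And>b. b \<in> UNIV \<Longrightarrow> 0 \<le> P b * s b"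
      by (simp add: P_def pos_part_def max_def)
  qed auto
  ultimately show False by linarith
qed

theorem lemma1:
  fixes v :: "nat \<Rightarrow> 'a::finite \<Rightarrow> real" and t :: nat
  shows "((\<exists>a. rm_r v t a > 0) \<longrightarrow> (\<exists>b. rm_r v (Suc t) b > 0))
       \<and> ((\<exists>a. rmp_q v t a > 0) \<longrightarrow> (\<exists>b. rmp_q v (Suc t) b > 0))"
proof (intro conjI impI)
  assume "\<exists>a. rm_r v t a > 0"
  then obtain a where "rm_r v t a > 0" by blast
  from key[where s="rm_r v t" and w="v t", OF this] show "\<exists>b. rm_r v (Suc t) b > 0" by simp
next
  assume "\<exists>a. rmp_q v t a > 0"
  then obtain a where "rmp_q v t a > 0" by blast
  from key[where s="rmp_q v t" and w="v t", OF this] obtain b where "rmp_q v t b + inst_regret (rmp_q v t) (v t) b > 0" by blast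
  then have "rmp_q v (Suc t) b > 0" by (simp add: pos_part_def)
  then show "\<exists>b. rmp_q v (Suc t) b > 0" by blast
qed

end
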